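(* Let $m\ge 38$ be even and let $G$ be a graph with maximum spectral radius among all $H(4,3)$-free graphs with $m$ edges and no isolated vertices. Let $\mathbf{x}$ be the Perron vector of $G$, $u^*$ a vertex maximizing $x_{u^*}$, $N = N(u^* )$, and $A_+ = \{v\in N : d_N(v)\ge 1\}$. Then $G[A_+]$ is isomorphic to a star $K_{1,t}$ for some $t\ge 1$.
   Context: All graphs are simple and undirected; $\rho(G)$ is the largest adjacency eigenvalue and the Perron vector is the positive unit eigenvector for $\rho(G)$ (the extremal $G$ is connected). $H(4,3)$ is the graph formed by a cycle of length $4$ and a triangle sharing exactly one common vertex. $N(v)$ denotes the neighbourhood of $v$, $d_S(v)=|N(v)\cap S|$, and $G[S]$ is the subgraph induced by $S$. *)

theory Defs
  imports Complex_Main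
begin

text \<open>A simple graph without isolated vertices is represented by its finite edge set
  E, each edge being a 2-element set of vertices; the vertex set is the union of E.\<close>

definition simple_graph :: "'a set set \<Rightarrow> bool" where
  "simple_graph E \<longleftrightarrow> finite E \<and> (\<forall>e\<in>E. card e = 2)"

definition verts :: "'a set set \<Rightarrow> 'a set" where
  "verts E = \<Union>E"

definition adj :: "'a set set \<Rightarrow> 'a \<Rightarrow> 'a \<Rightarrow> real" where
  "adj E v w = (if {v, w} \<in> E then 1 else 0)"

definition is_adj_eigenvector :: "'a set set \<Rightarrow> real \<Rightarrow> ('a \<Rightarrow> real) \<Rightarrow> bool" where
  "is_adj_eigenvector E lam x \<longleftrightarrow>
     (\<exists>v\<in>verts E. x v \<noteq> 0) \<and>
     (\<forall>v\<in>verts E. (\<Sum>w\<in>verts E. adj E v w * x w) = lam * x v)"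

definition adj_eigenvalues :: "'a set set \<Rightarrow> real set" where
  "adj_eigenvalues E = {lam. \<exists>x. is_adj_eigenvector E lam x}"

text \<open>Spectral radius = largest adjacency eigenvalue (the adjacency matrix is real symmetric).\<close>
definition spectral_radius :: "'a set set \<Rightarrow> real" where
  "spectral_radius E = Max (adj_eigenvalues E)"

definition perron_vector :: "'a set set \<Rightarrow> ('a \<Rightarrow> real) \<Rightarrow> bool" where
  "perron_vector E x \<longleftrightarrow> is_adj_eigenvector E (spectral_radius E) x \<and>
     (\<forall>v\<in>verts E. x v > 0) \<and> (\<Sum>v\<in>verts E. (x v)^2) = 1"

definition contains_subgraph :: "'b set set \<Rightarrow> 'a set set \<Rightarrow> bool" where
  "contains_subgraph H E \<longleftrightarrow> (\<exists>f. inj_on f (verts H) \<and> (\<forall>e\<in>H. f ` e \<in> E))"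

text \<open>H(4,3): 4-cycle 0-1-2-3-0 and triangle 0-4-5-0 sharing vertex 0.\<close>
definition H43 :: "nat set set" where
  "H43 = {{0,1},{1,2},{2,3},{3,0},{0,4},{4,5},{5,0}}"

definition H43_free :: "'a set set \<Rightarrow> bool" where
  "H43_free E \<longleftrightarrow> \<not> contains_subgraph H43 E"

definition neighbours :: "'a set set \<Rightarrow> 'a \<Rightarrow> 'a set" where
  "neighbours E v = {w. {v, w} \<in> E}"

definition induced_edges :: "'a set set \<Rightarrow> 'a set \<Rightarrow> 'a set set" where
  "induced_edges E S = {e\<in>E. e \<subseteq> S}"

definition graph_iso :: "'a set \<Rightarrow> 'a set set \<Rightarrow> 'b set \<Rightarrow> 'b set set \<Rightarrow> bool" where
  "graph_iso V1 E1 V2 E2 \<longleftrightarrow> (\<exists>f. bij_betw f V1 V2 \<and>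
      (\<forall>e. e \<subseteq> V1 \<longrightarrow> (e \<in> E1 \<longleftrightarrow> f ` e \<in> E2)))"

definition star_verts :: "nat \<Rightarrow> nat set" where
  "star_verts t = {0..t}"

definition star_edges :: "nat \<Rightarrow> nat set set" where
  "star_edges t = {{0, i} | i. i \<in> {1..t}}"

end

theory Submission
  imports Defs
begin

lemma adj_sym: "adj E v w = adj E w v"
  by (simp add: adj_def insert_commute)

lemma H43_sub:
  assumes "distinct [a0,a1,a2,a3,a4,a5]"
    and "{a0,a1}\<in>E" "{a1,a2}\<in>E" "{a2,a3}\<in>E" "{a3,a0}\<in>E" "{a0,a4}\<in>E" "{a4,a5}\<in>E" "{a5,a0}\<in>E"
  shows "contains_subgraph H43 E"
proof -
  let ?f = "\<lambda>i::nat. [a0,a1,a2,a3,a4,a5] ! i"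
  have V: "verts H43 = {0,1,2,3,4,5}" by (auto simp: verts_def H43_def)
  have "inj_on ?f (verts H43)" unfolding V using assms(1)
    by (auto simp: inj_on_def)
  moreover have "\<forall>e\<in>H43. ?f ` e \<in> E" using assms(2-) by (auto simp: H43_def)
  ultimately show ?thesis unfolding contains_subgraph_def by blast
qed

definition book :: "nat \<Rightarrow> nat set set" where
  "book k = insert {0,1} ((\<lambda>i. {0,i}) ` {2..k+1} \<union> (\<lambda>i. {1,i}) ` {2..k+1} \<union> {{k+2,k+3}})"

definition adjb :: "nat \<Rightarrow> nat \<Rightarrow> nat \<Rightarrow> bool" where
  "adjb k p q \<longleftrightarrow> (p = 0 \<and> q = 1) \<or> (p = 1 \<and> q = 0) \<or> (p = 0 \<and> q \<in> {2..k+1}) \<or> (q = 0 \<and> p \<in> {2..k+1})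
     \<or> (p = 1 \<and> q \<in> {2..k+1}) \<or> (q = 1 \<and> p \<in> {2..k+1}) \<or> (p = k+2 \<and> q = k+3) \<or> (p = k+3 \<and> q = k+2)"

lemma book_mem: "{p,q} \<in> book k \<longleftrightarrow> adjb k p q"
proof -
  let ?L = "{2..k+1}"
  have "{p,q} \<in> book k \<longleftrightarrow> {p,q} = {0,1} \<or> (\<exists>i\<in>?L. {p,q} = {0,i}) \<or> (\<exists>i\<in>?L. {p,q} = {1,i}) \<or> {p,q} = {k+2,k+3}"
    unfolding book_def by (simp only: insert_iff Un_iff image_iff empty_iff disj_assoc simp_thms)
  also have "\<dots> \<longleftrightarrow> ((p = 0 \<and> q = 1) \<or> (p = 1 \<and> q = 0)) \<or> (\<exists>i\<in>?L. (p = 0 \<and> q = i) \<or> (p = i \<and> q = 0))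
      \<or> (\<exists>i\<in>?L. (p = 1 \<and> q = i) \<or> (p = i \<and> q = 1)) \<or> ((p = k+2 \<and> q = k+3) \<or> (p = k+3 \<and> q = k+2))"
    by (simp only: doubleton_eq_iff)
  also have "\<dots> \<longleftrightarrow> adjb k p q" unfolding adjb_def by blast
  finally show ?thesis .
qed

lemma book_card2: "e \<in> book k \<Longrightarrow> card e = 2"
  unfolding book_def by (elim insertE UnE imageE) auto

lemma book_simple: "simple_graph (book k)"
  unfolding simple_graph_def using book_card2 by (auto simp: book_def)

lemma book_card: "card (book k) = 2 * k + 2"
proof -
  let ?L = "{2..k+1}"
  have i0: "inj_on (\<lambda>i. {0::nat,i}) ?L"
  proof (rule inj_onI)
    fix i j assume ij: "i \<in> ?L" "j \<in> ?L" "{0::nat,i} = {0,j}"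
    then have "i \<in> {0,j}" by blast
    then show "i = j" using ij(1) by auto
  qed
  have i1: "inj_on (\<lambda>i. {1::nat,i}) ?L"
  proof (rule inj_onI)
    fix i j assume ij: "i \<in> ?L" "j \<in> ?L" "{1::nat,i} = {1,j}"
    then have "i \<in> {1,j}" by blast
    then show "i = j" using ij(1) by auto
  qed
  have c0: "card ((\<lambda>i. {0::nat,i}) ` ?L) = k" using card_image[OF i0] by simp
  have c1: "card ((\<lambda>i. {1::nat,i}) ` ?L) = k" using card_image[OF i1] by simp
  have d01: "(\<lambda>i. {0::nat,i}) ` ?L \<inter> (\<lambda>i. {1::nat,i}) ` ?L = {}"
  proof (rule ccontr)
    assume "\<not> ?thesis"
    then obtain i j where ij: "i \<in> ?L" "j \<in> ?L" "{0::nat,i} = {1,j}" by blast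
    then have "(0::nat) \<in> {1,j}" by blast
    then show False using ij(2) by auto
  qed
  have c01: "card ((\<lambda>i. {0::nat,i}) ` ?L \<union> (\<lambda>i. {1::nat,i}) ` ?L) = 2 * k"
    using card_Un_disjoint[OF _ _ d01] c0 c1 by simp
  have n2: "{k+2,k+3} \<notin> (\<lambda>i. {0::nat,i}) ` ?L \<union> (\<lambda>i. {1::nat,i}) ` ?L"
  proof
    assume "{k+2,k+3} \<in> (\<lambda>i. {0::nat,i}) ` ?L \<union> (\<lambda>i. {1::nat,i}) ` ?L"
    then show False
    proof (elim UnE imageE)
      fix i assume "{k+2,k+3} = {0::nat,i}"
      then have "(0::nat) \<in> {k+2,k+3}" by (metis insertI1)
      then show False by simp
    next
      fix i assume "{k+2,k+3} = {1::nat,i}"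
      then have "(1::nat) \<in> {k+2,k+3}" by (metis insertI1)
      then show False by simp
    qed
  qed
  have c012: "card ((\<lambda>i. {0::nat,i}) ` ?L \<union> (\<lambda>i. {1::nat,i}) ` ?L \<union> {{k+2,k+3}}) = 2 * k + 1"
    using c01 n2 by (simp add: Un_insert_right card_insert_if del: insert_image)
  have n3: "{0,1} \<notin> (\<lambda>i. {0::nat,i}) ` ?L \<union> (\<lambda>i. {1::nat,i}) ` ?L \<union> {{k+2,k+3}}"
  proof
    assume "{0,1} \<in> (\<lambda>i. {0::nat,i}) ` ?L \<union> (\<lambda>i. {1::nat,i}) ` ?L \<union> {{k+2,k+3}}"
    then show False
    proof (elim UnE imageE)
      fix i assume i: "i \<in> ?L" "{0,1} = {0::nat,i}"
      then have "(1::nat) \<in> {0,i}" by (metis insertI1 insertI2)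
      then show False using i(1) by auto
    next
      fix i assume i: "i \<in> ?L" "{0,1} = {1::nat,i}"
      then have "(0::nat) \<in> {1,i}" by (metis insertI1)
      then show False using i(1) by auto
    next
      assume "{0,1} \<in> {{k+2,k+3}}"
      then have "(0::nat) \<in> {k+2,k+3}" by (metis insertI1 singletonD)
      then show False by simp
    qed
  qed
  show ?thesis unfolding book_def using c012 n3 by (simp add: card_insert_if del: insert_image)
qed

lemma book_verts: "verts (book k) = {0..k+3}"
proof
  show "verts (book k) \<subseteq> {0..k+3}" unfolding verts_def book_def by auto
  show "{0..k+3} \<subseteq> verts (book k)"
  proof
    fix v assume v: "v \<in> {0..k+3}"
    have "v = 0 \<or> v = 1 \<or> v \<in> {2..k+1} \<or> v = k+2 \<or> v = k+3" using v by auto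
    then show "v \<in> verts (book k)" unfolding verts_def book_def by auto
  qed
qed

lemma adjb_L: "adjb k p q \<Longrightarrow> p \<in> {2..k+1} \<Longrightarrow> q = 0 \<or> q = 1"
  unfolding adjb_def by auto
lemma adjb_P: "adjb k p q \<Longrightarrow> p \<ge> k+2 \<Longrightarrow> (p = k+2 \<and> q = k+3) \<or> (p = k+3 \<and> q = k+2)"
  unfolding adjb_def by auto
lemma adjb_0: "adjb k 0 q \<Longrightarrow> q = 1 \<or> q \<in> {2..k+1}"
  unfolding adjb_def by auto
lemma adjb_1: "adjb k 1 q \<Longrightarrow> q = 0 \<or> q \<in> {2..k+1}"
  unfolding adjb_def by auto
lemma adjb_sym: "adjb k p q \<Longrightarrow> adjb k q p"
  unfolding adjb_def by auto
lemma adjb_LL: "adjb k p q \<Longrightarrow> p \<in> {2..k+1} \<Longrightarrow> q \<in> {2..k+1} \<Longrightarrow> False"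
  unfolding adjb_def by auto

lemma book_free: "H43_free (book k)"
  unfolding H43_free_def contains_subgraph_def
proof
  assume "\<exists>f. inj_on f (verts H43) \<and> (\<forall>e\<in>H43. f ` e \<in> book k)"
  then obtain f where inj: "inj_on f (verts H43)" and ed: "\<forall>e\<in>H43. f ` e \<in> book k" by blast
  have V: "verts H43 = {0,1,2,3,4,5}" by (auto simp: verts_def H43_def)
  have ds: "distinct [f 0, f 1, f 2, f 3, f 4, f 5]"
    using inj unfolding V by (auto simp: inj_on_def)
  have a: "adjb k (f 0) (f 1)" "adjb k (f 1) (f 2)" "adjb k (f 2) (f 3)" "adjb k (f 3) (f 0)"
      "adjb k (f 0) (f 4)" "adjb k (f 4) (f 5)" "adjb k (f 5) (f 0)"
    using ed unfolding H43_def by (auto simp: book_mem[symmetric])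
  have a': "adjb k (f 0) (f 3)" "adjb k (f 0) (f 5)" "adjb k (f 2) (f 1)" using a adjb_sym by auto
  have f0: "f 0 = 0 \<or> f 0 = 1"
  proof (rule ccontr)
    assume h: "\<not> (f 0 = 0 \<or> f 0 = 1)"
    show False
    proof (cases "f 0 \<in> {2..k+1}")
      case True
      then show False using adjb_L[OF a(1)] adjb_L[OF a'(1)] adjb_L[OF a(5)] ds by auto
    next
      case False
      then have "f 0 \<ge> k + 2" using h by auto
      then show False using adjb_P[OF a(1)] adjb_P[OF a'(1)] adjb_P[OF a(5)] ds by auto
    qed
  qed
  then show False
  proof
    assume z: "f 0 = 0"
    have f45: "f 4 = 1 \<or> f 5 = 1"
      using adjb_0[of k "f 4"] adjb_0[of k "f 5"] a(5) a'(2) adjb_LL[OF a(6)] z by auto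
    have "f 1 \<in> {2..k+1}" using adjb_0[of k "f 1"] a(1) z f45 ds by auto
    then have "f 2 = 0 \<or> f 2 = 1" by (rule adjb_L[OF a(2)])
    then show False using z f45 ds by auto
  next
    assume z: "f 0 = 1"
    have f45: "f 4 = 0 \<or> f 5 = 0"
      using adjb_1[of k "f 4"] adjb_1[of k "f 5"] a(5) a'(2) adjb_LL[OF a(6)] z by auto
    have "f 1 \<in> {2..k+1}" using adjb_1[of k "f 1"] a(1) z f45 ds by auto
    then have "f 2 = 0 \<or> f 2 = 1" by (rule adjb_L[OF a(2)])
    then show False using z f45 ds by auto
  qed
qed

lemma adj_book: "adj (book k) v w = (if adjb k v w then 1 else 0)"
  by (simp add: adj_def book_mem)

lemma nbr_sum:
  "(\<Sum>w\<in>{0..k+3}. adj (book k) v w * y w) = (\<Sum>w\<in>{w\<in>{0..k+3}. adjb k v w}. y w)"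
proof -
  have "(\<Sum>w\<in>{0..k+3}. adj (book k) v w * y w) = (\<Sum>w\<in>{0..k+3}. if adjb k v w then y w else 0)"
    by (intro sum.cong refl) (simp add: adj_book)
  also have "\<dots> = (\<Sum>w\<in>{w\<in>{0..k+3}. adjb k v w}. y w)" by (rule sum.inter_filter[symmetric]) simp
  finally show ?thesis .
qed

lemma N0: "{w\<in>{0..k+3}. adjb k 0 w} = insert 1 {2..k+1}" by (auto simp: adjb_def)
lemma N1: "{w\<in>{0..k+3}. adjb k 1 w} = insert 0 {2..k+1}" by (auto simp: adjb_def)
lemma NL: "i \<in> {2..k+1} \<Longrightarrow> {w\<in>{0..k+3}. adjb k i w} = {0,1}" by (auto simp: adjb_def)
lemma NP: "{w\<in>{0..k+3}. adjb k (k+2) w} = {k+3}" by (auto simp: adjb_def)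
lemma NQ: "{w\<in>{0..k+3}. adjb k (k+3) w} = {k+2}" by (auto simp: adjb_def)

lemma S0: "(\<Sum>w\<in>{0..k+3}. adj (book k) 0 w * y w) = y 1 + (\<Sum>i\<in>{2..k+1}. y i)"
  unfolding nbr_sum N0 by (simp)
lemma S1: "(\<Sum>w\<in>{0..k+3}. adj (book k) 1 w * y w) = y 0 + (\<Sum>i\<in>{2..k+1}. y i)"
  unfolding nbr_sum N1 by (simp)
lemma SL: assumes "i \<in> {2..k+1}" shows "(\<Sum>w\<in>{0..k+3}. adj (book k) i w * y w) = y 0 + y 1"
  unfolding nbr_sum NL[OF assms] by simp
lemma SP: "(\<Sum>w\<in>{0..k+3}. adj (book k) (k+2) w * y w) = y (k+3)"
  unfolding nbr_sum NP by simp
lemma SQ: "(\<Sum>w\<in>{0..k+3}. adj (book k) (k+3) w * y w) = y (k+2)"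
  unfolding nbr_sum NQ by simp

lemma V0_cases: "(v::nat) \<in> {0..k+3} \<Longrightarrow> v = 0 \<or> v = 1 \<or> v \<in> {2..k+1} \<or> v = k+2 \<or> v = k+3"
  by auto

definition lam0 :: "nat \<Rightarrow> real" where "lam0 k = (1 + sqrt (1 + 8 * real k)) / 2"

lemma lam0_eq: "(lam0 k)^2 = lam0 k + 2 * real k"
proof -
  have s: "(sqrt (1 + 8 * real k))^2 = 1 + 8 * real k" by simp
  show ?thesis unfolding lam0_def using s by (simp add: power2_eq_square algebra_simps)
qed

lemma lam0_pos: "lam0 k \<ge> 1" unfolding lam0_def by simp

lemma lam0_eig: "lam0 k \<in> adj_eigenvalues (book k)"
proof -
  let ?l = "lam0 k"
  define y where "y w = (if w \<le> 1 then 1 else if w \<le> k+1 then 2 / ?l else 0)" for w :: nat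
  have lp: "?l > 0" using lam0_pos[of k] by simp
  have sL: "(\<Sum>i\<in>{2..k+1}. y i) = real k * (2 / ?l)"
    by (simp add: y_def)
  have key: "1 + real k * (2 / ?l) = ?l * 1"
  proof -
    have "?l * ?l = ?l + 2 * real k" using lam0_eq[of k] by (simp add: power2_eq_square)
    then show ?thesis using lp by (simp add: field_simps)
  qed
  have "is_adj_eigenvector (book k) ?l y"
    unfolding is_adj_eigenvector_def book_verts
  proof (intro conjI ballI)
    show "\<exists>v\<in>{0..k + 3}. y v \<noteq> 0" by (rule bexI[of _ 0]) (auto simp: y_def)
  next
    fix v assume v: "v \<in> {0..k+3}"
    show "(\<Sum>w\<in>{0..k+3}. adj (book k) v w * y w) = ?l * y v"
      using V0_cases[OF v]
    proof (elim disjE)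
      assume v0: "v = 0"
      have "(\<Sum>w\<in>{0..k+3}. adj (book k) v w * y w) = y 1 + (\<Sum>i\<in>{2..k+1}. y i)"
        unfolding v0 by (rule S0)
      then show ?thesis using key sL v0 by (simp add: y_def)
    next
      assume v1: "v = 1"
      have "(\<Sum>w\<in>{0..k+3}. adj (book k) v w * y w) = y 0 + (\<Sum>i\<in>{2..k+1}. y i)"
        unfolding v1 by (rule S1)
      then show ?thesis using key sL v1 by (simp add: y_def)
    next
      assume vl: "v \<in> {2..k+1}" then show ?thesis using lp by (simp add: SL y_def)
    next
      assume vp: "v = k+2"
      have "(\<Sum>w\<in>{0..k+3}. adj (book k) v w * y w) = y (k+3)"
        unfolding vp by (rule SP)
      then show ?thesis using vp by (simp add: y_def)
    next
      assume vq: "v = k+3"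
      have "(\<Sum>w\<in>{0..k+3}. adj (book k) v w * y w) = y (k+2)"
        unfolding vq by (rule SQ)
      then show ?thesis using vq by (simp add: y_def)
    qed
  qed
  then show ?thesis by (auto simp: adj_eigenvalues_def)
qed

lemma book_eigs: "adj_eigenvalues (book k) \<subseteq> {0, 1, -1, lam0 k, 1 - lam0 k}"
proof
  fix \<mu> assume "\<mu> \<in> adj_eigenvalues (book k)"
  then obtain y where ev: "is_adj_eigenvector (book k) \<mu> y" by (auto simp: adj_eigenvalues_def)
  have nz: "\<exists>v\<in>{0..k+3}. y v \<noteq> 0" and eq: "\<And>v. v \<in> {0..k+3} \<Longrightarrow> (\<Sum>w\<in>{0..k+3}. adj (book k) v w * y w) = \<mu> * y v"
    using ev unfolding is_adj_eigenvector_def book_verts by auto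
  show "\<mu> \<in> {0, 1, -1, lam0 k, 1 - lam0 k}"
  proof (rule ccontr)
    assume nm: "\<mu> \<notin> {0, 1, -1, lam0 k, 1 - lam0 k}"
    have m0: "\<mu> \<noteq> 0" and m1: "\<mu> \<noteq> 1" and m2: "\<mu> \<noteq> -1" and m3: "\<mu> \<noteq> lam0 k" and m4: "\<mu> \<noteq> 1 - lam0 k"
      using nm by auto
    let ?s = "\<Sum>i\<in>{2..k+1}. y i"
    have e0: "y 1 + ?s = \<mu> * y 0" using eq[of 0] S0[of k y] by simp
    have e1: "y 0 + ?s = \<mu> * y 1" using eq[of 1] S1[of k y] by (simp del: One_nat_def)
    have eL: "y 0 + y 1 = \<mu> * y i" if "i \<in> {2..k+1}" for i using eq[of i] SL[OF that, of y] that by simp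
    have eP: "y (k+3) = \<mu> * y (k+2)" using eq[of "k+2"] SP[of k y] by (simp only: atLeastAtMost_iff) simp
    have eQ: "y (k+2) = \<mu> * y (k+3)" using eq[of "k+3"] SQ[of k y] by (simp only: atLeastAtMost_iff) simp
    have "y (k+2) = \<mu> * \<mu> * y (k+2)" using eP eQ by simp
    then have "(1 - \<mu> * \<mu>) * y (k+2) = 0" by (simp add: algebra_simps)
    moreover have "1 - \<mu> * \<mu> \<noteq> 0"
    proof
      assume "1 - \<mu> * \<mu> = 0"
      then have "(1 - \<mu>) * (1 + \<mu>) = 0" by (simp add: algebra_simps)
      then show False using m1 m2 by auto
    qed
    ultimately have yP: "y (k+2) = 0" by simp
    then have yQ: "y (k+3) = 0" using eP by simp
    have "(1 + \<mu>) * (y 1 - y 0) = 0" using e0 e1 by (simp add: algebra_simps)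
    then have y10: "y 1 = y 0" using m2 by auto
    have yi: "y i = 2 * y 0 / \<mu>" if "i \<in> {2..k+1}" for i using eL[OF that] y10 m0 by (simp add: field_simps)
    have s: "?s = real k * (2 * y 0 / \<mu>)" using yi by simp
    have "y 0 + real k * (2 * y 0 / \<mu>) = \<mu> * y 0" using e0 y10 s by simp
    then have "\<mu> * y 0 + 2 * real k * y 0 = \<mu> * \<mu> * y 0" using m0 by (simp add: field_simps)
    then have "y 0 * (\<mu> * \<mu> - \<mu> - 2 * real k) = 0" by (simp add: algebra_simps)
    moreover have "\<mu> * \<mu> - \<mu> - 2 * real k \<noteq> 0"
    proof
      assume h: "\<mu> * \<mu> - \<mu> - 2 * real k = 0"
      have "(\<mu> - lam0 k) * (\<mu> - (1 - lam0 k)) = \<mu> * \<mu> - \<mu> - ((lam0 k)^2 - lam0 k)"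
        by (simp add: algebra_simps power2_eq_square)
      also have "\<dots> = 0" using h lam0_eq[of k] by simp
      finally show False using m3 m4 by auto
    qed
    ultimately have y0: "y 0 = 0" by simp
    have "\<forall>v\<in>{0..k+3}. y v = 0"
    proof
      fix v assume v: "v \<in> {0..k+3}"
      show "y v = 0" using V0_cases[OF v] y0 y10 yi yP yQ by auto
    qed
    then show False using nz by auto
  qed
qed

lemma book_rho: "spectral_radius (book k) \<ge> lam0 k"
proof -
  have fin: "finite (adj_eigenvalues (book k))" using book_eigs by (rule finite_subset) simp
  show ?thesis unfolding spectral_radius_def using fin lam0_eig by (rule Max_ge)
qed

lemma star_iso:
  fixes E :: "'a set set" and N :: "'a set"
  assumes finN: "finite N" and c2: "\<forall>e\<in>E. card e = 2" and zN: "z \<in> N"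
    and cen: "\<forall>v\<in>N. \<forall>w\<in>N. {v,w} \<in> E \<longrightarrow> v = z \<or> w = z" and ex: "\<exists>w\<in>N. {z,w} \<in> E"
  shows "\<exists>t\<ge>1. graph_iso {v\<in>N. \<exists>w\<in>N. {v,w} \<in> E} (induced_edges E {v\<in>N. \<exists>w\<in>N. {v,w} \<in> E}) (star_verts t) (star_edges t)"
proof -
  define A where "A = {v\<in>N. \<exists>w\<in>N. {v,w} \<in> E}"
  define L where "L = A - {z}"
  define t where "t = card L"
  have ne: "{v,w} \<in> E \<Longrightarrow> v \<noteq> w" for v w using c2 by fastforce
  have zA: "z \<in> A" using ex zN by (auto simp: A_def)
  have AN: "A \<subseteq> N" by (auto simp: A_def)
  have finL: "finite L" using finN AN by (auto simp: L_def intro: finite_subset)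
  obtain w0 where w0: "w0 \<in> N" "{z,w0} \<in> E" using ex by blast
  have "w0 \<in> L" using w0 zN ne[OF w0(2)] by (auto simp: L_def A_def insert_commute)
  then have t1: "t \<ge> 1" using finL by (auto simp: t_def card_gt_0_iff Suc_le_eq)
  have Ledge: "{z,l} \<in> E" if "l \<in> L" for l
  proof -
    from that obtain w where w: "l \<in> N" "w \<in> N" "{l,w} \<in> E" "l \<noteq> z" by (auto simp: L_def A_def)
    then have "w = z" using cen by blast
    then show ?thesis using w by (simp add: insert_commute)
  qed
  obtain h where h: "bij_betw h {1..t} L" using ex_bij_betw_nat_finite_1[OF finL] by (auto simp: t_def)
  define g where "g = inv_into {1..t} h"
  have g: "bij_betw g L {1..t}" unfolding g_def by (rule bij_betw_inv_into[OF h])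
  define f where "f v = (if v = z then 0 else g v)" for v
  have gL: "l \<in> L \<Longrightarrow> g l \<in> {1..t}" for l using g by (auto simp: bij_betw_def)
  have Aeq: "A = insert z L" using zA by (auto simp: L_def)
  have zL: "z \<notin> L" by (simp add: L_def)
  have bij: "bij_betw f A {0..t}"
  proof -
    have "inj_on f A"
    proof (rule inj_onI)
      fix v w assume vw: "v \<in> A" "w \<in> A" "f v = f w"
      show "v = w"
      proof (cases "v = z"; cases "w = z")
        assume "v = z" "w \<noteq> z" then show ?thesis using vw gL[of w] by (auto simp: f_def Aeq)
      next
        assume "v \<noteq> z" "w = z" then show ?thesis using vw gL[of v] by (auto simp: f_def Aeq)
      next
        assume "v \<noteq> z" "w \<noteq> z" then show ?thesis using vw g by (auto simp: f_def Aeq bij_betw_def inj_on_def)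
      qed simp
    qed
    moreover have "f ` A = {0..t}"
    proof -
      have "f ` A = insert 0 (f ` L)" by (simp add: Aeq f_def zL)
      also have "f ` L = g ` L" using zL by (auto simp: f_def intro!: image_cong)
      also have "g ` L = {1..t}" using g by (simp add: bij_betw_def)
      finally show ?thesis by auto
    qed
    ultimately show ?thesis by (simp add: bij_betw_def)
  qed
  have edges: "e \<in> induced_edges E A \<longleftrightarrow> f ` e \<in> star_edges t" if eA: "e \<subseteq> A" for e
  proof
    assume "e \<in> induced_edges E A"
    then have eE: "e \<in> E" by (simp add: induced_edges_def)
    then obtain v w where vw: "e = {v,w}" "v \<noteq> w" using c2 card_2_iff by metis
    have vA: "v \<in> A" "w \<in> A" using eA vw by auto
    then have "v \<in> N" "w \<in> N" using AN by auto
    then have "v = z \<or> w = z" using cen eE vw by blast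
    then show "f ` e \<in> star_edges t"
    proof
      assume "v = z"
      then have "w \<in> L" using vA vw by (auto simp: L_def)
      then show ?thesis using vw \<open>v = z\<close> gL[of w] by (auto simp: f_def star_edges_def)
    next
      assume "w = z"
      then have "v \<in> L" using vA vw by (auto simp: L_def)
      then show ?thesis using vw \<open>w = z\<close> gL[of v] by (auto simp: f_def star_edges_def insert_commute)
    qed
  next
    assume "f ` e \<in> star_edges t"
    then obtain i where i: "f ` e = {0,i}" "i \<in> {1..t}" by (auto simp: star_edges_def)
    have f0: "f y = 0 \<Longrightarrow> y \<in> A \<Longrightarrow> y = z" for y using gL[of y] by (auto simp: f_def Aeq split: if_splits)
    obtain v where v: "v \<in> e" "f v = 0" using i(1) by (metis imageE insertI1)
    obtain w where w: "w \<in> e" "f w = i" using i(1) by (metis imageE insertI1 insert_commute)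
    have vz: "v = z" using f0 v eA by auto
    have wz: "w \<noteq> z" using w i(2) by (auto simp: f_def)
    have wL: "w \<in> L" using w eA wz by (auto simp: Aeq)
    have "e \<subseteq> {z,w}"
    proof
      fix y assume y: "y \<in> e"
      then have "f y \<in> {0,i}" using i(1) by blast
      then have "f y = 0 \<or> f y = i" by simp
      then show "y \<in> {z,w}"
      proof (elim disjE)
        assume "f y = 0" then show ?thesis using f0 y eA by auto
      next
        assume fy: "f y = i"
        then have yz: "y \<noteq> z" using i(2) by (auto simp: f_def)
        then have yL: "y \<in> L" using y eA by (auto simp: Aeq)
        have "g y = g w" using fy w yz wz by (simp add: f_def)
        then have "y = w" using g yL wL by (auto simp: bij_betw_def inj_on_def)
        then show ?thesis by simp
      qed
    qed
    moreover have "{z,w} \<subseteq> e" using v w vz by auto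
    ultimately have "e = {z,w}" by blast
    then show "e \<in> induced_edges E A" using Ledge[OF wL] eA by (simp add: induced_edges_def)
  qed
  have "graph_iso A (induced_edges E A) (star_verts t) (star_edges t)"
    unfolding graph_iso_def star_verts_def using bij edges by blast
  then show ?thesis using t1 by (auto simp: A_def)
qed

locale setting =
  fixes E :: "'a set set" and x :: "'a \<Rightarrow> real" and u :: 'a and \<rho> :: real
  assumes sg: "simple_graph E" and free: "H43_free E" and uV: "u \<in> verts E"
  and pos: "\<forall>v\<in>verts E. 0 < x v" and le: "\<forall>v\<in>verts E. x v \<le> x u"
  and eig: "\<forall>v\<in>verts E. (\<Sum>w\<in>verts E. adj E v w * x w) = \<rho> * x v"
  and rho: "\<rho> \<ge> 13/2" and gap: "\<rho>^2 - \<rho> \<ge> real (card E) - 2"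
begin

definition "V = verts E"
definition "N = neighbours E u"
definition "Ou = V - insert u N"
definition "c = x u"

lemma finE: "finite E" using sg by (simp add: simple_graph_def)
lemma card2: "e \<in> E \<Longrightarrow> card e = 2" using sg by (simp add: simple_graph_def)

lemma finV: "finite V"
proof -
  have "\<forall>e\<in>E. finite e" using card2 by (metis card.infinite zero_neq_numeral)
  then show ?thesis using finE by (simp add: V_def verts_def)
qed

lemma edge_V: "{v,w} \<in> E \<Longrightarrow> v \<in> V \<and> w \<in> V"
  by (auto simp: V_def verts_def)

lemma edge_ne: "{v,w} \<in> E \<Longrightarrow> v \<noteq> w"
  using card2 by fastforce

lemma edge_sym: "{v,w} \<in> E \<Longrightarrow> {w,v} \<in> E"
  by (simp add: insert_commute)

lemma inN: "v \<in> N \<longleftrightarrow> {u,v} \<in> E" by (simp add: N_def neighbours_def)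

lemma uN: "u \<notin> N" using edge_ne inN by blast
lemma NV: "N \<subseteq> V" using edge_V inN by blast
lemma uVV: "u \<in> V" using uV by (simp add: V_def)
lemma finN: "finite N" using finV NV finite_subset by blast
lemma finOu: "finite Ou" using finV by (simp add: Ou_def)
lemma Ou_iff: "w \<in> Ou \<longleftrightarrow> w \<in> V \<and> w \<noteq> u \<and> w \<notin> N" by (auto simp: Ou_def)

lemma adj01: "adj E v w = 0 \<or> adj E v w = 1" by (simp add: adj_def)
lemma adj_ge0: "adj E v w \<ge> 0" by (simp add: adj_def)
lemma adj_le1: "adj E v w \<le> 1" by (simp add: adj_def)
lemma adj_self: "adj E v v = 0" using card2[of "{v}"] by (auto simp: adj_def)
lemma adj_u: "adj E u w = (if w \<in> N then 1 else 0)" by (simp add: adj_def inN)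
lemma adj_u': "adj E w u = (if w \<in> N then 1 else 0)" using adj_u adj_sym by metis
lemma adj1: "adj E v w = 1 \<longleftrightarrow> {v,w} \<in> E" by (simp add: adj_def)

lemma xpos: "v \<in> V \<Longrightarrow> 0 < x v" using pos by (simp add: V_def)
lemma xle: "v \<in> V \<Longrightarrow> x v \<le> c" using le by (simp add: V_def c_def)
lemma cpos: "0 < c" using xpos uVV by (simp add: c_def)
lemma eigV: "v \<in> V \<Longrightarrow> (\<Sum>w\<in>V. adj E v w * x w) = \<rho> * x v" using eig by (simp add: V_def)

lemma Vsplit: fixes f :: "'a \<Rightarrow> real" shows "(\<Sum>w\<in>V. f w) = f u + (\<Sum>w\<in>N. f w) + (\<Sum>w\<in>Ou. f w)"
proof -
  have V: "V = insert u (N \<union> Ou)" using NV uVV by (auto simp: Ou_def)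
  have "(\<Sum>w\<in>V. f w) = f u + (\<Sum>w\<in>N \<union> Ou. f w)"
    unfolding V using finN finOu uN by (subst sum.insert) (auto simp: Ou_def)
  also have "(\<Sum>w\<in>N \<union> Ou. f w) = (\<Sum>w\<in>N. f w) + (\<Sum>w\<in>Ou. f w)"
    using finN finOu by (intro sum.union_disjoint) (auto simp: Ou_def)
  finally show ?thesis by (simp add: ac_simps)
qed

end

context setting begin

lemma adj_bool: "adj E v w = of_bool ({v,w} \<in> E)" by (simp add: adj_def)

lemma handshake: "(\<Sum>v\<in>V. \<Sum>w\<in>V. adj E v w) = 2 * real (card E)"
proof -
  define B where "B v = {w\<in>V. {v,w}\<in>E}" for v
  have 1: "(\<Sum>w\<in>V. adj E v w) = real (card (B v))" for v
  proof -
    have "(\<Sum>w\<in>V. adj E v w) = (\<Sum>w\<in>V. of_bool ({v,w}\<in>E))" by (simp add: adj_bool)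
    also have "\<dots> = real (card (V \<inter> {w. {v,w}\<in>E}))" by (rule sum_of_bool_eq[OF finV finV])
    moreover have "V \<inter> {w. {v,w}\<in>E} = B v" by (auto simp: B_def)
    ultimately show ?thesis by simp
  qed
  have 2: "(\<Sum>v\<in>V. real (card (B v))) = real (card (Sigma V B))"
    using finV by (simp add: card_SigmaI B_def)
  have 3: "Sigma V B = (\<Union>e\<in>E. {(v,w). {v,w} = e})"
    using edge_V by (auto simp: B_def)
  have 4: "card (\<Union>e\<in>E. {(v,w). {v,w} = e}) = (\<Sum>e\<in>E. card {(v,w). {v,w} = e})"
  proof (rule card_UN_disjoint)
    show "finite E" by (rule finE)
    show "\<forall>e\<in>E. finite {(v, w). {v, w} = e}"
    proof
      fix e assume "e \<in> E"
      then obtain a b where "e = {a,b}" "a \<noteq> b" using card2 card_2_iff by metis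
      then have "{(v, w). {v, w} = e} = {(a,b),(b,a)}" by (auto simp: doubleton_eq_iff)
      then show "finite {(v, w). {v, w} = e}" by simp
    qed
    show "\<forall>i\<in>E. \<forall>j\<in>E. i \<noteq> j \<longrightarrow> {(v, w). {v, w} = i} \<inter> {(v, w). {v, w} = j} = {}"
      by auto
  qed
  have 5: "card {(v,w). {v,w} = e} = 2" if eE: "e \<in> E" for e
  proof -
    obtain a b where "e = {a,b}" "a \<noteq> b" using card2[OF eE] card_2_iff by metis
    then have "{(v, w). {v, w} = e} = {(a,b),(b,a)}" by (auto simp: doubleton_eq_iff)
    then show ?thesis using \<open>a \<noteq> b\<close> by simp
  qed
  have "(\<Sum>v\<in>V. \<Sum>w\<in>V. adj E v w) = real (card (Sigma V B))" using 1 2 by simp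
  also have "\<dots> = real (\<Sum>e\<in>E. card {(v,w). {v,w} = e})" using 3 4 by simp
  also have "\<dots> = real (\<Sum>e\<in>E. (2::nat))" using 5 by (simp cong: sum.cong)
  finally show ?thesis by simp
qed

end

context setting begin

definition "T = (\<Sum>v\<in>N. \<Sum>w\<in>N. adj E v w * (2 * x w - c))"
definition "Bx = (\<Sum>v\<in>N. \<Sum>w\<in>Ou. adj E v w * (c - x w))"
definition "R = (\<Sum>v\<in>Ou. \<Sum>w\<in>Ou. adj E v w)"

lemma Ou_notN: "w \<in> Ou \<Longrightarrow> w \<notin> N \<and> w \<noteq> u" by (simp add: Ou_iff)

lemma rho_c: "\<rho> * c = (\<Sum>w\<in>N. x w)"
proof -
  have "\<rho> * c = (\<Sum>w\<in>V. adj E u w * x w)" using eigV[OF uVV] by (simp add: c_def)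
  also have "\<dots> = adj E u u * x u + (\<Sum>w\<in>N. adj E u w * x w) + (\<Sum>w\<in>Ou. adj E u w * x w)"
    by (rule Vsplit)
  also have "(\<Sum>w\<in>N. adj E u w * x w) = (\<Sum>w\<in>N. x w)" by (simp add: adj_u)
  also have "(\<Sum>w\<in>Ou. adj E u w * x w) = 0" by (simp add: adj_u Ou_notN)
  finally show ?thesis by (simp add: adj_self)
qed

lemma eig_split: "v \<in> V \<Longrightarrow> \<rho> * x v = adj E v u * c + (\<Sum>w\<in>N. adj E v w * x w) + (\<Sum>w\<in>Ou. adj E v w * x w)"
  using eigV[of v] Vsplit[of "\<lambda>w. adj E v w * x w"] by (simp add: c_def)

lemma rho2_c: "\<rho>^2 * c = real (card N) * c + (\<Sum>v\<in>N. \<Sum>w\<in>N. adj E v w * x w) + (\<Sum>v\<in>N. \<Sum>w\<in>Ou. adj E v w * x w)"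
proof -
  have "\<rho>^2 * c = (\<Sum>v\<in>N. \<rho> * x v)" proof -
    have "\<rho>^2 * c = \<rho> * (\<rho> * c)" by (simp add: power2_eq_square)
    also have "\<dots> = \<rho> * (\<Sum>w\<in>N. x w)" using rho_c by simp
    finally show ?thesis by (simp add: sum_distrib_left)
  qed
  also have "\<dots> = (\<Sum>v\<in>N. c + (\<Sum>w\<in>N. adj E v w * x w) + (\<Sum>w\<in>Ou. adj E v w * x w))"
    using NV by (intro sum.cong refl) (auto simp: eig_split adj_u')
  finally show ?thesis by (simp add: sum.distrib)
qed

lemma edges_count: "2 * real (card E) = 2 * real (card N) + (\<Sum>v\<in>N. \<Sum>w\<in>N. adj E v w) + 2 * (\<Sum>v\<in>N. \<Sum>w\<in>Ou. adj E v w) + R"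
proof -
  have h: "(\<Sum>w\<in>V. adj E v w) = adj E v u + (\<Sum>w\<in>N. adj E v w) + (\<Sum>w\<in>Ou. adj E v w)" for v
    by (rule Vsplit)
  have "2 * real (card E) = (\<Sum>v\<in>V. \<Sum>w\<in>V. adj E v w)" using handshake by simp
  also have "\<dots> = (\<Sum>w\<in>V. adj E u w) + (\<Sum>v\<in>N. \<Sum>w\<in>V. adj E v w) + (\<Sum>v\<in>Ou. \<Sum>w\<in>V. adj E v w)"
    by (rule Vsplit)
  also have "(\<Sum>w\<in>V. adj E u w) = real (card N)"
    using h[of u] by (simp add: adj_u adj_self Ou_notN)
  also have "(\<Sum>v\<in>N. \<Sum>w\<in>V. adj E v w) = real (card N) + (\<Sum>v\<in>N. \<Sum>w\<in>N. adj E v w) + (\<Sum>v\<in>N. \<Sum>w\<in>Ou. adj E v w)"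
    by (simp add: h adj_u' sum.distrib)
  also have "(\<Sum>v\<in>Ou. \<Sum>w\<in>V. adj E v w) = (\<Sum>v\<in>Ou. \<Sum>w\<in>N. adj E v w) + R"
    by (simp add: h adj_u' sum.distrib Ou_notN R_def)
  also have "(\<Sum>v\<in>Ou. \<Sum>w\<in>N. adj E v w) = (\<Sum>v\<in>N. \<Sum>w\<in>Ou. adj E v w)"
    by (subst sum.swap) (simp add: adj_sym)
  finally show ?thesis by simp
qed

lemma keyI: "T \<ge> 2 * (\<rho> - 2) * c + 2 * Bx + R * c"
proof -
  define TN where "TN = (\<Sum>v\<in>N. \<Sum>w\<in>N. adj E v w * x w)"
  define TO where "TO = (\<Sum>v\<in>N. \<Sum>w\<in>Ou. adj E v w * x w)"
  define PNN where "PNN = (\<Sum>v\<in>N. \<Sum>w\<in>N. adj E v w)"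
  define PNO where "PNO = (\<Sum>v\<in>N. \<Sum>w\<in>Ou. adj E v w)"
  have T: "T = 2 * TN - PNN * c"
    by (simp add: T_def TN_def PNN_def algebra_simps sum_subtractf sum_distrib_left sum_distrib_right)
  have B: "Bx = PNO * c - TO"
    by (simp add: Bx_def TO_def PNO_def algebra_simps sum_subtractf sum_distrib_left sum_distrib_right)
  have r2: "\<rho>^2 * c = real (card N) * c + TN + TO" using rho2_c by (simp add: TN_def TO_def)
  have m: "2 * real (card E) = 2 * real (card N) + PNN + 2 * PNO + R" using edges_count by (simp add: PNN_def PNO_def)
  have g: "(\<rho>^2 - \<rho>) * c \<ge> (real (card E) - 2) * c" using gap cpos by (simp add: mult_right_mono)
  have "2 * ((\<rho>^2 - \<rho>) * c) \<ge> 2 * ((real (card E) - 2) * c)" using g by simp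
  then have "2 * (\<rho>^2 * c) - 2 * \<rho> * c \<ge> (2 * real (card E)) * c - 4 * c" by (simp add: algebra_simps)
  then have "2 * (real (card N) * c + TN + TO) - 2 * \<rho> * c \<ge> (2 * real (card N) + PNN + 2 * PNO + R) * c - 4 * c"
    by (simp only: r2 m)
  then show ?thesis by (simp add: T B algebra_simps)
qed

end

context setting begin

lemma noH: "contains_subgraph H43 E \<Longrightarrow> False" using free by (simp add: H43_free_def)

lemma P3E:
  assumes "p \<in> N" "q \<in> N" "r \<in> N" "s \<in> N" "t \<in> N" "distinct [p,q,r,s,t]"
    "{p,q} \<in> E" "{q,r} \<in> E" "{s,t} \<in> E"
  shows False
proof -
  have "contains_subgraph H43 E"
    apply (rule H43_sub[of u p q r s t])
    using assms uN by (auto simp: inN insert_commute)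
  then show False by (rule noH)
qed

lemma C4W:
  assumes "v \<in> N" "z \<in> N" "v \<noteq> z" "w \<in> Ou" "{v,w} \<in> E" "{z,w} \<in> E"
    "p \<in> N" "q \<in> N" "p \<noteq> q" "p \<noteq> v" "p \<noteq> z" "q \<noteq> v" "q \<noteq> z" "{p,q} \<in> E"
  shows False
proof -
  have "contains_subgraph H43 E"
    apply (rule H43_sub[of u v w z p q])
    using assms uN Ou_notN[OF assms(4)] by (auto simp: inN insert_commute)
  then show False by (rule noH)
qed

lemma C4W2:
  assumes "v \<in> N" "z \<in> N" "p \<in> N" "q \<in> N" "distinct [v,z,p,q]" "w \<in> Ou" "{v,w} \<in> E" "{z,w} \<in> E"
    "{z,q} \<in> E" "{q,v} \<in> E" "{p,v} \<in> E"
  shows False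
proof -
  have "contains_subgraph H43 E"
    apply (rule H43_sub[of v w z q u p])
    using assms uN Ou_notN[OF assms(6)] by (auto simp: inN insert_commute)
  then show False by (rule noH)
qed

lemma Bx_ge0: "Bx \<ge> 0"
  unfolding Bx_def using xle by (intro sum_nonneg) (auto simp: adj_ge0 Ou_iff)
lemma R_ge0: "R \<ge> 0"
  unfolding R_def by (intro sum_nonneg) (auto simp: adj_ge0)

lemma keyI': "T \<ge> 2 * (\<rho> - 2) * c"
  using keyI Bx_ge0 R_ge0 cpos by (smt (verit) mult_nonneg_nonneg)

lemma T_restrict:
  assumes "S \<subseteq> N" "\<And>v w. v \<in> N \<Longrightarrow> w \<in> N \<Longrightarrow> {v,w} \<in> E \<Longrightarrow> v \<in> S \<and> w \<in> S"
  shows "T = (\<Sum>v\<in>S. \<Sum>w\<in>S. adj E v w * (2 * x w - c))"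
proof -
  have "T = (\<Sum>v\<in>S. \<Sum>w\<in>N. adj E v w * (2 * x w - c))"
    unfolding T_def
    by (rule sum.mono_neutral_right[OF finN assms(1)]) (auto intro!: sum.neutral simp: adj_def dest: assms(2))
  also have "\<dots> = (\<Sum>v\<in>S. \<Sum>w\<in>S. adj E v w * (2 * x w - c))"
    using assms(1) by (intro sum.cong refl sum.mono_neutral_right[OF finN assms(1)]) (auto simp: adj_def dest: assms(2))
  finally show ?thesis .
qed

lemma term_le: "w \<in> V \<Longrightarrow> adj E v w * (2 * x w - c) \<le> adj E v w * c"
  using xle[of w] adj_ge0[of v w] by (simp add: mult_left_mono)

lemma no_edges: assumes "\<And>v w. v \<in> N \<Longrightarrow> w \<in> N \<Longrightarrow> {v,w} \<notin> E" shows False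
proof -
  have "T = 0" unfolding T_def
  proof (intro sum.neutral ballI)
    fix v w assume "v \<in> N" "w \<in> N"
    then show "adj E v w * (2 * x w - c) = 0" using assms by (simp add: adj_def)
  qed
  moreover have "0 < 2 * (\<rho> - 2) * c" using rho cpos by simp
  ultimately show False using keyI' by linarith
qed

lemma T_small: assumes "T \<le> k * c" "k < 9" shows False
proof -
  have "2 * (\<rho> - 2) * c \<ge> 9 * c" using rho cpos by (intro mult_right_mono) auto
  moreover have "k * c < 9 * c" using assms(2) cpos by simp
  ultimately show False using keyI' assms(1) by linarith
qed

lemma term_le1: "w \<in> V \<Longrightarrow> adj E v w * (2 * x w - c) \<le> c"
proof -
  assume w: "w \<in> V"
  have "adj E v w * (2 * x w - c) \<le> adj E v w * c" by (rule term_le[OF w])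
  also have "\<dots> \<le> c" using adj_le1[of v w] cpos by (simp add: mult_left_le_one_le)
  finally show ?thesis .
qed

lemma triangle:
  assumes "a \<in> N" "b \<in> N" "d \<in> N" "distinct [a,b,d]"
    "\<And>v w. v \<in> N \<Longrightarrow> w \<in> N \<Longrightarrow> {v,w} \<in> E \<Longrightarrow> v \<in> {a,b,d} \<and> w \<in> {a,b,d}"
  shows False
proof -
  have T: "T = (\<Sum>v\<in>{a,b,d}. \<Sum>w\<in>{a,b,d}. adj E v w * (2 * x w - c))"
    using assms by (intro T_restrict) auto
  have Va: "a \<in> V" "b \<in> V" "d \<in> V" using assms NV by auto
  have "T = adj E a b * (2 * x b - c) + adj E a d * (2 * x d - c) + adj E b a * (2 * x a - c)
     + adj E b d * (2 * x d - c) + adj E d a * (2 * x a - c) + adj E d b * (2 * x b - c)"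
    unfolding T using assms(4) by (simp add: adj_self)
  also have "\<dots> \<le> 6 * c"
    using term_le1[OF Va(1), of b] term_le1[OF Va(1), of d] term_le1[OF Va(2), of a]
       term_le1[OF Va(2), of d] term_le1[OF Va(3), of a] term_le1[OF Va(3), of b] by linarith
  finally show False using T_small[of 6] by simp
qed

end

context setting begin

lemma sum_adj_le1:
  assumes "finite A" "\<And>v1 v2. v1 \<in> A \<Longrightarrow> v2 \<in> A \<Longrightarrow> {v1,w} \<in> E \<Longrightarrow> {v2,w} \<in> E \<Longrightarrow> v1 = v2"
  shows "(\<Sum>v\<in>A. adj E v w) \<le> 1"
proof (cases "\<exists>v0\<in>A. {v0,w} \<in> E")
  case True
  then obtain v0 where v0: "v0 \<in> A" "{v0,w} \<in> E" by blast
  have "(\<Sum>v\<in>A. adj E v w) = adj E v0 w + (\<Sum>v\<in>A - {v0}. adj E v w)"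
    using assms(1) v0(1) by (rule sum.remove)
  also have "(\<Sum>v\<in>A - {v0}. adj E v w) = 0"
    using assms(2) v0 by (intro sum.neutral) (auto simp: adj_def)
  finally show ?thesis using adj_le1 by simp
next
  case False
  then have "(\<Sum>v\<in>A. adj E v w) = 0" by (intro sum.neutral) (auto simp: adj_def)
  then show ?thesis by simp
qed

lemma D1:
  assumes N: "a1 \<in> N" "a2 \<in> N" "b1 \<in> N" "b2 \<in> N" and dist: "distinct [a1,a2,b1,b2]"
    and ea: "{a1,a2} \<in> E" and eb: "{b1,b2} \<in> E"
    and nc: "{a1,b1} \<notin> E" "{a1,b2} \<notin> E" "{a2,b1} \<notin> E" "{a2,b2} \<notin> E"
  shows False
proof -
  have deg: "p = r" if q: "q \<in> N" "p \<in> N" "r \<in> N" "{p,q} \<in> E" "{r,q} \<in> E" for p q r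
  proof (rule ccontr)
    assume pr: "p \<noteq> r"
    have pq: "p \<noteq> q" "r \<noteq> q" using edge_ne q by auto
    have nc': "{b1,a1} \<notin> E" "{b2,a1} \<notin> E" "{b1,a2} \<notin> E" "{b2,a2} \<notin> E"
      using nc by (simp_all add: insert_commute)
    have qp: "{q,p} \<in> E" "{q,r} \<in> E" using q by (simp_all add: insert_commute)
    show False
    proof (cases "q \<in> {a1,a2}")
      case True
      then have "p \<notin> {b1,b2}" "r \<notin> {b1,b2}" using q nc nc' by auto
      then show False using P3E[of p q r b1 b2] q qp N pr pq dist True eb by auto
    next
      case qa: False
      show False
      proof (cases "q \<in> {b1,b2}")
        case True
        then have "p \<notin> {a1,a2}" "r \<notin> {a1,a2}" using q nc nc' by auto
        then show False using P3E[of p q r a1 a2] q qp N pr pq dist True ea by auto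
      next
        case qb: False
        have ea': "{a2,a1} \<in> E" using ea by (simp add: insert_commute)
        show False
        proof (cases "p \<in> {a1,a2} \<or> r \<in> {a1,a2}")
          case pa: True
          show False
          proof (cases "p \<in> {b1,b2} \<or> r \<in> {b1,b2}")
            case True
            show False
            proof (cases "p \<in> {a1,a2}")
              case True
              then show False using P3E[of a2 a1 q b1 b2] P3E[of a1 a2 q b1 b2] q N dist qa qb ea ea' eb qp by auto
            next
              case False
              then have "r \<in> {a1,a2}" using pa by simp
              then show False using P3E[of a2 a1 q b1 b2] P3E[of a1 a2 q b1 b2] q N dist qa qb ea ea' eb qp by auto
            qed
          next
            case False
            then show False using P3E[of p q r b1 b2] q qp N pr pq dist qb eb by auto
          qed
        next
          case False
          then show False using P3E[of p q r a1 a2] q qp N pr pq dist qa ea by auto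
        qed
      qed
    qed
  qed
  define d where "d w = (\<Sum>v\<in>N. adj E v w)" for w
  have d1: "d w \<le> 1" if "w \<in> N" for w
    unfolding d_def using that by (intro sum_adj_le1[OF finN]) (auto intro: deg)
  have d0: "d w \<ge> 0" for w unfolding d_def by (intro sum_nonneg) (simp add: adj_ge0)
  have T: "T = (\<Sum>w\<in>N. d w * (2 * x w - c))"
    unfolding T_def d_def by (subst sum.swap) (simp add: sum_distrib_right)
  have T1: "T \<le> (\<Sum>w\<in>N. d w * c)"
    unfolding T using NV xle d0 by (intro sum_mono mult_left_mono) auto
  have T2: "T \<le> (\<Sum>w\<in>N. 2 * x w - d w * c)"
    unfolding T
  proof (intro sum_mono)
    fix w assume w: "w \<in> N"
    have "d w * (2 * x w) \<le> 1 * (2 * x w)" using d1[OF w] xpos[of w] NV w by (intro mult_right_mono) auto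
    then show "d w * (2 * x w - c) \<le> 2 * x w - d w * c" by (simp add: algebra_simps)
  qed
  have "2 * T \<le> (\<Sum>w\<in>N. 2 * x w)" using T1 T2 by (simp add: sum_subtractf)
  also have "\<dots> = 2 * (\<rho> * c)" using rho_c by (simp add: sum_distrib_left)
  finally have "T \<le> \<rho> * c" by simp
  moreover have "\<rho> * c < 2 * (\<rho> - 2) * c" using rho cpos by simp
  ultimately show False using keyI' by linarith
qed

end

context setting begin

lemma D2_W:
  assumes N: "a \<in> N" "b \<in> N" "d \<in> N" "e \<in> N" and dist: "distinct [a,b,d,e]"
    and inS: "\<And>v w. v \<in> N \<Longrightarrow> w \<in> N \<Longrightarrow> {v,w} \<in> E \<Longrightarrow> v \<in> {a,b,d,e} \<and> w \<in> {a,b,d,e}"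
    and H: "\<And>w v z. w \<in> Ou \<Longrightarrow> v \<in> {a,b,d,e} \<Longrightarrow> z \<in> N \<Longrightarrow> {v,w} \<in> E \<Longrightarrow> {z,w} \<in> E \<Longrightarrow> z = v"
    and Tb: "T \<le> 6 * (x a + x b + x d + x e) - 10 * c"
  shows False
proof -
  define S where "S = {a,b,d,e}"
  have SN: "S \<subseteq> N" using N by (auto simp: S_def)
  have finS: "finite S" by (simp add: S_def)
  define g where "g v = (\<Sum>w\<in>Ou. adj E v w * x w)" for v
  define r where "r w = (\<Sum>y\<in>Ou. adj E w y)" for w
  define G where "G = (\<Sum>v\<in>S. g v)"
  have adjx: "adj E v w * x w \<le> c" if "w \<in> V" for v w
  proof -
    have "adj E v w * x w \<le> 1 * x w" using adj_le1[of v w] xpos[OF that] by (intro mult_right_mono) auto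
    then show ?thesis using xle[OF that] by simp
  qed
  have adjx0: "0 \<le> adj E v w * x w" if "w \<in> V" for v w
    using adj_ge0[of v w] xpos[OF that] by simp
  have OuV: "w \<in> Ou \<Longrightarrow> w \<in> V" for w by (simp add: Ou_iff)
  have g0: "g v \<ge> 0" for v unfolding g_def using adjx0 OuV by (intro sum_nonneg) auto
  have G0: "G \<ge> 0" unfolding G_def using g0 by (intro sum_nonneg) auto
  have i: "\<rho> * x v \<le> 4 * c + g v" if v: "v \<in> S" for v
  proof -
    have vN: "v \<in> N" using v SN by auto
    have vV: "v \<in> V" using vN NV by auto
    have "(\<Sum>w\<in>N. adj E v w * x w) = (\<Sum>w\<in>S. adj E v w * x w)"
      by (rule sum.mono_neutral_right[OF finN SN]) (auto simp: adj_def S_def dest: inS[OF vN])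
    also have "\<dots> \<le> 3 * c"
    proof -
      have "v = a \<or> v = b \<or> v = d \<or> v = e" using v by (auto simp: S_def)
      moreover have Va: "a \<in> V" "b \<in> V" "d \<in> V" "e \<in> V" using N NV by auto
      ultimately show ?thesis
        unfolding S_def using dist adjx[OF Va(1), of v] adjx[OF Va(2), of v] adjx[OF Va(3), of v] adjx[OF Va(4), of v]
        by (elim disjE; simp add: adj_self; linarith)
    qed
    finally have s3: "(\<Sum>w\<in>N. adj E v w * x w) \<le> 3 * c" .
    have "\<rho> * x v = adj E v u * c + (\<Sum>w\<in>N. adj E v w * x w) + g v"
      using eig_split[OF vV] by (simp add: g_def)
    then show ?thesis using s3 vN by (simp add: adj_u')
  qed
  have sumS: "\<rho> * (x a + x b + x d + x e) \<le> 16 * c + G"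
  proof -
    have "\<rho> * (x a + x b + x d + x e) = \<rho> * x a + \<rho> * x b + \<rho> * x d + \<rho> * x e" by (simp add: algebra_simps)
    also have "\<dots> \<le> (4 * c + g a) + (4 * c + g b) + (4 * c + g d) + (4 * c + g e)"
      using i[of a] i[of b] i[of d] i[of e] by (simp add: S_def)
    also have "\<dots> = 16 * c + G" unfolding G_def S_def using dist by simp
    finally show ?thesis .
  qed
  have ii: "(\<Sum>v\<in>S. adj E v w) \<le> 1" if w: "w \<in> Ou" for w
  proof (rule sum_adj_le1[OF finS])
    fix v1 v2 assume v12: "v1 \<in> S" "v2 \<in> S" "{v1,w} \<in> E" "{v2,w} \<in> E"
    have v2N: "v2 \<in> N" using v12(2) SN by auto
    have v1S: "v1 \<in> {a,b,d,e}" using v12(1) by (simp add: S_def)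
    have "v2 = v1" by (rule H[OF w v1S v2N v12(3) v12(4)])
    then show "v1 = v2" by simp
  qed
  have iii: "\<rho> * x w \<le> c + r w * c" if v: "v \<in> S" and w: "w \<in> Ou" and vw: "{v,w} \<in> E" for v w
  proof -
    have wV: "w \<in> V" and wN: "w \<notin> N" using w by (auto simp: Ou_iff)
    have vN: "v \<in> N" using v SN by auto
    have "(\<Sum>y\<in>N. adj E w y * x y) = adj E w v * x v + (\<Sum>y\<in>N - {v}. adj E w y * x y)"
      by (rule sum.remove[OF finN vN])
    also have "(\<Sum>y\<in>N - {v}. adj E w y * x y) = 0"
    proof (intro sum.neutral ballI)
      fix y assume y: "y \<in> N - {v}"
      have "{w,y} \<notin> E"
      proof
        assume "{w,y} \<in> E"
        then have "{y,w} \<in> E" by (simp add: insert_commute)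
        moreover have "v \<in> {a,b,d,e}" using v by (simp add: S_def)
        moreover have "y \<in> N" using y by simp
        ultimately have "y = v" using H[OF w _ _ vw] by blast
        then show False using y by simp
      qed
      then show "adj E w y * x y = 0" by (simp add: adj_def)
    qed
    finally have sN: "(\<Sum>y\<in>N. adj E w y * x y) \<le> c" using adjx[of v w] vN NV by auto
    have sO: "(\<Sum>y\<in>Ou. adj E w y * x y) \<le> r w * c"
      unfolding r_def sum_distrib_right
      using xle OuV adj_ge0 by (intro sum_mono mult_left_mono) auto
    have "\<rho> * x w = adj E w u * c + (\<Sum>y\<in>N. adj E w y * x y) + (\<Sum>y\<in>Ou. adj E w y * x y)"
      using eig_split[OF wV] .
    then show ?thesis using sN sO wN by (simp add: adj_u')
  qed
  have B1: "Bx \<ge> (\<Sum>v\<in>S. \<Sum>w\<in>Ou. adj E v w * (c - x w))"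
    unfolding Bx_def
    by (rule sum_mono2[OF finN SN]) (auto intro!: sum_nonneg mult_nonneg_nonneg adj_ge0 simp: xle OuV)
  have R1: "R \<ge> (\<Sum>v\<in>S. \<Sum>w\<in>Ou. adj E v w * r w)"
  proof -
    have "(\<Sum>v\<in>S. \<Sum>w\<in>Ou. adj E v w * r w) = (\<Sum>w\<in>Ou. (\<Sum>v\<in>S. adj E v w) * r w)"
      by (subst sum.swap) (simp add: sum_distrib_right)
    also have "\<dots> \<le> (\<Sum>w\<in>Ou. 1 * r w)"
      using ii by (intro sum_mono mult_right_mono) (auto simp: r_def intro!: sum_nonneg adj_ge0)
    also have "\<dots> = R" by (simp add: R_def r_def)
    finally show ?thesis .
  qed
  have pw: "adj E v w * (2 * (c - x w) + r w * c) \<ge> adj E v w * ((\<rho> - 2) * x w)"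
    if "v \<in> S" "w \<in> Ou" for v w
  proof (cases "{v,w} \<in> E")
    case True
    then show ?thesis using iii[OF that True] cpos by (simp add: adj_def algebra_simps)
  next
    case False
    then show ?thesis by (simp add: adj_def)
  qed
  have iv: "2 * Bx + R * c \<ge> (\<rho> - 2) * G"
  proof -
    have "2 * Bx + R * c \<ge> (\<Sum>v\<in>S. \<Sum>w\<in>Ou. adj E v w * (2 * (c - x w) + r w * c))"
    proof -
      have "(\<Sum>v\<in>S. \<Sum>w\<in>Ou. adj E v w * (2 * (c - x w) + r w * c))
          = 2 * (\<Sum>v\<in>S. \<Sum>w\<in>Ou. adj E v w * (c - x w)) + (\<Sum>v\<in>S. \<Sum>w\<in>Ou. adj E v w * r w) * c"
      proof -
        have "(\<Sum>v\<in>S. \<Sum>w\<in>Ou. adj E v w * (2 * (c - x w) + r w * c))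
           = (\<Sum>v\<in>S. \<Sum>w\<in>Ou. 2 * (adj E v w * (c - x w)) + (adj E v w * r w) * c)"
          by (intro sum.cong refl) (simp add: algebra_simps)
        also have "\<dots> = 2 * (\<Sum>v\<in>S. \<Sum>w\<in>Ou. adj E v w * (c - x w)) + (\<Sum>v\<in>S. \<Sum>w\<in>Ou. adj E v w * r w) * c"
          by (simp add: sum.distrib sum_distrib_left sum_distrib_right)
        finally show ?thesis .
      qed
      then show ?thesis using B1 R1 cpos by (smt (verit) mult_right_mono)
    qed
    moreover have "(\<Sum>v\<in>S. \<Sum>w\<in>Ou. adj E v w * (2 * (c - x w) + r w * c)) \<ge> (\<Sum>v\<in>S. \<Sum>w\<in>Ou. adj E v w * ((\<rho> - 2) * x w))"
      using pw by (intro sum_mono) auto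
    moreover have "(\<Sum>v\<in>S. \<Sum>w\<in>Ou. adj E v w * ((\<rho> - 2) * x w)) = (\<rho> - 2) * G"
      by (simp add: G_def g_def sum_distrib_left algebra_simps)
    ultimately show ?thesis by linarith
  qed
  define X where "X = x a + x b + x d + x e"
  have h1: "6 * X - 10 * c \<ge> 2 * (\<rho> - 2) * c + (\<rho> - 2) * G"
    using keyI Tb iv unfolding X_def by linarith
  have rho0: "\<rho> \<ge> 0" using rho by simp
  have h2: "\<rho> * (6 * X - 10 * c) \<ge> \<rho> * (2 * (\<rho> - 2) * c + (\<rho> - 2) * G)"
    using h1 rho0 by (rule mult_left_mono)
  have h3: "\<rho> * X \<le> 16 * c + G" using sumS by (simp add: X_def)
  have rr: "\<rho> * \<rho> \<ge> 13/2 * \<rho>" using rho by (intro mult_right_mono) auto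
  have "\<rho> * \<rho> - 2 * \<rho> - 6 \<ge> 0" using rr rho by linarith
  then have h4: "(\<rho> * \<rho> - 2 * \<rho> - 6) * G \<ge> 0" using G0 by (rule mult_nonneg_nonneg)
  have "2 * \<rho> * \<rho> + 6 * \<rho> - 96 > 0" using rr rho by linarith
  then have h5: "(2 * \<rho> * \<rho> + 6 * \<rho> - 96) * c > 0" using cpos by (rule mult_pos_pos)
  show False using h2 h3 h4 h5 by (simp add: algebra_simps)
qed

end

context setting begin

lemma D2_inS:
  assumes N: "a \<in> N" "b \<in> N" "d \<in> N" "e \<in> N" and dist: "distinct [a,b,d,e]"
    and E: "{a,b} \<in> E" "{b,d} \<in> E" "{d,e} \<in> E"
    and st: "s \<in> N" "t \<in> N" "{s,t} \<in> E"
  shows "s \<in> {a,b,d,e}"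
proof (rule ccontr)
  assume s: "s \<notin> {a,b,d,e}"
  have ne: "s \<noteq> t" using edge_ne st by auto
  have ts: "{t,s} \<in> E" using st by (simp add: insert_commute)
  have E': "{b,a} \<in> E" "{d,b} \<in> E" "{e,d} \<in> E" using E by (simp_all add: insert_commute)
  show False
  proof (cases "t \<in> {a,b,d}")
    case False
    then show False using P3E[of a b d s t] N st s dist E ne by auto
  next
    case t1: True
    show False
    proof (cases "t \<in> {b,d,e}")
      case False
      then show False using P3E[of b d e s t] N st s dist E ne by auto
    next
      case True
      then have "t = b \<or> t = d" using t1 dist by auto
      then show False
        using P3E[of s b a d e] P3E[of s d e a b] N st s dist E E' by auto
    qed
  qed
qed

lemma adjx_le: "w \<in> V \<Longrightarrow> adj E v w * x w \<le> c"
  using xle[of w] xpos[of w] adj_le1[of v w] adj_ge0[of v w]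
  by (smt (verit) mult_left_le_one_le mult_right_mono)

lemma D2:
  assumes N: "a \<in> N" "b \<in> N" "d \<in> N" "e \<in> N" and dist: "distinct [a,b,d,e]"
    and E: "{a,b} \<in> E" "{b,d} \<in> E" "{d,e} \<in> E"
  shows False
proof -
  define S where "S = {a,b,d,e}"
  have SN: "S \<subseteq> N" using N by (auto simp: S_def)
  have finS: "finite S" by (simp add: S_def)
  have inS: "v \<in> S \<and> w \<in> S" if "v \<in> N" "w \<in> N" "{v,w} \<in> E" for v w
    using D2_inS[OF N dist E, of v w] D2_inS[OF N dist E, of w v] that
    by (auto simp: S_def insert_commute)
  have Va: "a \<in> V" "b \<in> V" "d \<in> V" "e \<in> V" using N NV by auto
  have xa: "0 \<le> x a" "x a \<le> c" "0 \<le> x b" "x b \<le> c" "0 \<le> x d" "x d \<le> c" "0 \<le> x e" "x e \<le> c"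
    using Va xpos xle by (auto simp: less_imp_le)
  have T: "T = (\<Sum>v\<in>S. \<Sum>w\<in>S. adj E v w * (2 * x w - c))"
    using SN inS by (intro T_restrict) auto
  have ab: "adj E a b = 1" "adj E b a = 1" "adj E b d = 1" "adj E d b = 1" "adj E d e = 1" "adj E e d = 1"
    using E by (simp_all add: adj_def insert_commute)
  have T2: "T = (2 * x b - c) + (2 * x a - c) + (2 * x d - c) + (2 * x b - c) + (2 * x e - c) + (2 * x d - c)
     + adj E a d * (2 * x d - c + 2 * x a - c) + adj E a e * (2 * x e - c + 2 * x a - c)
     + adj E b e * (2 * x e - c + 2 * x b - c)"
    unfolding T S_def using dist by (simp add: adj_self ab adj_sym[of E d a] adj_sym[of E e a] adj_sym[of E e b] algebra_simps)
  show False
  proof (cases "({a,d} \<in> E \<and> {a,e} \<in> E) \<or> ({a,d} \<in> E \<and> {b,e} \<in> E) \<or> ({a,e} \<in> E \<and> {b,e} \<in> E)")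
    case False
    then have "T \<le> 8 * c" unfolding T2 using xa by (auto simp: adj_def)
    then show False using T_small[of 8] by simp
  next
    case two: True
    have Tb: "T \<le> 6 * (x a + x b + x d + x e) - 10 * c" unfolding T2 using xa two by (auto simp: adj_def)
    have H: "z = v" if w: "w \<in> Ou" and v: "v \<in> S" and z: "z \<in> N" and vw: "{v,w} \<in> E" and zw: "{z,w} \<in> E" for w v z
    proof (rule ccontr)
      assume zv: "z \<noteq> v"
      have vN: "v \<in> N" using v SN by auto
      have E': "{b,a} \<in> E" "{d,b} \<in> E" "{e,d} \<in> E" using E by (simp_all add: insert_commute)
      note c1 = C4W[OF vN z zv[symmetric] w vw zw]
      note c2 = C4W2[OF vN z _ _ _ w vw zw]
      from v have "v = a \<or> v = b \<or> v = d \<or> v = e" by (auto simp: S_def)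
      then show False
      proof (elim disjE)
        assume "v = a" then show False
          using c1[of b d] c1[of d e] c1[of b e] c2[of e b] two N dist E E' zv
          by (cases "z = a"; cases "z = b"; cases "z = d"; cases "z = e"; auto simp: insert_commute)
      next
        assume "v = b" then show False
          using c1[of d e] c1[of a d] c1[of a e] c2[of e a] c2[of d a] two N dist E E' zv
          by (cases "z = a"; cases "z = b"; cases "z = d"; cases "z = e"; auto simp: insert_commute)
      next
        assume "v = d" then show False
          using c1[of a b] c1[of a e] c1[of b e] c2[of e b] c2[of e a] two N dist E E' zv
          by (cases "z = a"; cases "z = b"; cases "z = d"; cases "z = e"; auto simp: insert_commute)
      next
        assume "v = e" then show False
          using c1[of a b] c1[of b d] c1[of a d] c2[of d a] two N dist E E' zv
          by (cases "z = a"; cases "z = b"; cases "z = d"; cases "z = e"; auto simp: insert_commute)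
      qed
    qed
    have inS': "\<And>v w. v \<in> N \<Longrightarrow> w \<in> N \<Longrightarrow> {v,w} \<in> E \<Longrightarrow> v \<in> {a,b,d,e} \<and> w \<in> {a,b,d,e}"
      using inS unfolding S_def by blast
    have H': "\<And>w v z. w \<in> Ou \<Longrightarrow> v \<in> {a,b,d,e} \<Longrightarrow> z \<in> N \<Longrightarrow> {v,w} \<in> E \<Longrightarrow> {z,w} \<in> E \<Longrightarrow> z = v"
      using H unfolding S_def by blast
    show False using D2_W[OF N dist inS' H' Tb] .
  qed
qed

end

context setting begin

lemma two_disjoint:
  assumes N: "a1 \<in> N" "a2 \<in> N" "b1 \<in> N" "b2 \<in> N" and dist: "distinct [a1,a2,b1,b2]"
    and ea: "{a1,a2} \<in> E" and eb: "{b1,b2} \<in> E"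
  shows False
proof -
  have ea': "{a2,a1} \<in> E" and eb': "{b2,b1} \<in> E" using ea eb by (simp_all add: insert_commute)
  show False
  proof (cases "{a2,b1} \<in> E")
    case True then show False using D2[of a1 a2 b1 b2] N dist ea eb by simp
  next
    case f1: False
    show False
    proof (cases "{a1,b1} \<in> E")
      case True then show False using D2[of a2 a1 b1 b2] N dist ea' eb by auto
    next
      case f2: False
      show False
      proof (cases "{a1,b2} \<in> E")
        case True then show False using D2[of a2 a1 b2 b1] N dist ea' eb' by auto
      next
        case f3: False
        show False
        proof (cases "{a2,b2} \<in> E")
          case True then show False using D2[of a1 a2 b2 b1] N dist ea eb' by auto
        next
          case False then show False using D1[OF N dist ea eb f2 f3 f1] by simp
        qed
      qed
    qed
  qed
qed

lemma center: "\<exists>z\<in>N. (\<forall>v\<in>N. \<forall>w\<in>N. {v,w} \<in> E \<longrightarrow> v = z \<or> w = z) \<and> (\<exists>w\<in>N. {z,w} \<in> E)"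
proof (rule ccontr)
  assume nc: "\<not> ?thesis"
  obtain a b where ab: "a \<in> N" "b \<in> N" "{a,b} \<in> E" using no_edges by blast
  have ab': "{b,a} \<in> E" using ab by (simp add: insert_commute)
  have anb: "a \<noteq> b" using edge_ne ab by auto
  have noc: "\<exists>p\<in>N. \<exists>q\<in>N. {p,q} \<in> E \<and> p \<noteq> z \<and> q \<noteq> z" if "z \<in> N" "\<exists>w\<in>N. {z,w} \<in> E" for z
    using nc that by blast
  obtain p q where pq: "p \<in> N" "q \<in> N" "{p,q} \<in> E" "p \<noteq> a" "q \<noteq> a" using noc[of a] ab by blast
  have qp: "{q,p} \<in> E" using pq by (simp add: insert_commute)
  have pnq: "p \<noteq> q" using edge_ne pq by auto
  obtain d where d: "d \<in> N" "{b,d} \<in> E" "d \<noteq> a" "d \<noteq> b"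
  proof (cases "p = b \<or> q = b")
    case True
    then show ?thesis using that pq qp pnq by auto
  next
    case False
    then show ?thesis using two_disjoint[of a b p q] ab pq pnq anb by auto
  qed
  obtain p' q' where pq': "p' \<in> N" "q' \<in> N" "{p',q'} \<in> E" "p' \<noteq> b" "q' \<noteq> b" using noc[of b] ab ab' by blast
  have qp': "{q',p'} \<in> E" using pq' by (simp add: insert_commute)
  have pnq': "p' \<noteq> q'" using edge_ne pq' by auto
  obtain d' where d': "d' \<in> N" "{a,d'} \<in> E" "d' \<noteq> a" "d' \<noteq> b"
  proof (cases "p' = a \<or> q' = a")
    case True
    then show ?thesis using that pq' qp' pnq' by auto
  next
    case False
    then show ?thesis using two_disjoint[of a b p' q'] ab pq' pnq' anb by auto
  qed
  show False
  proof (cases "d' = d")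
    case False
    then show False using two_disjoint[of b d a d'] ab d d' anb by auto
  next
    case True
    have ad: "{a,d} \<in> E" using d' True by simp
    show False
    proof (cases "\<forall>v\<in>N. \<forall>w\<in>N. {v,w} \<in> E \<longrightarrow> v \<in> {a,b,d} \<and> w \<in> {a,b,d}")
      case True
      then show False using triangle[of a b d] ab d anb by auto
    next
      case False
      then obtain s t where st: "s \<in> N" "t \<in> N" "{s,t} \<in> E" "\<not> (s \<in> {a,b,d} \<and> t \<in> {a,b,d})" by blast
      have ts: "{t,s} \<in> E" using st by (simp add: insert_commute)
      have snt: "s \<noteq> t" using edge_ne st by auto
      have key: False if "s' \<in> N" "t' \<in> N" "{s',t'} \<in> E" "s' \<notin> {a,b,d}" "s' \<noteq> t'" for s' t'
      proof -
        consider "t' \<notin> {a,b,d}" | "t' = a" | "t' = b" | "t' = d" by blast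
        then show False
        proof cases
          case 1 then show False using two_disjoint[of a b s' t'] that ab anb by auto
        next
          case 2 then show False using two_disjoint[of s' t' b d] that ab d anb by auto
        next
          case 3 then show False using two_disjoint[of s' t' a d] that ab d ad anb by auto
        next
          case 4 then show False using two_disjoint[of s' t' a b] that ab d anb by auto
        qed
      qed
      show False
      proof (cases "s \<in> {a,b,d}")
        case True
        then have "t \<notin> {a,b,d}" using st by blast
        then show False using key[of t s] st ts snt by auto
      next
        case False
        then show False using key[of s t] st snt by auto
      qed
    qed
  qed
qed

end


theorem mainTheorem7:
  fixes E :: "'a set set" and m :: nat and x :: "'a \<Rightarrow> real" and u :: 'a
  assumes "m \<ge> 38" and "even m"
    and "simple_graph E" and "card E = m" and "H43_free E"
    and "\<forall>E' :: nat set set. simple_graph E' \<and> card E' = m \<and> H43_free E'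
           \<longrightarrow> spectral_radius E' \<le> spectral_radius E"
    and "perron_vector E x"
    and "u \<in> verts E" and "\<forall>v\<in>verts E. x v \<le> x u"
  shows "\<exists>t\<ge>1. graph_iso
            {v \<in> neighbours E u. \<exists>w\<in>neighbours E u. {v, w} \<in> E}
            (induced_edges E {v \<in> neighbours E u. \<exists>w\<in>neighbours E u. {v, w} \<in> E})
            (star_verts t) (star_edges t)"
proof -
  note a = assms
  define k where "k = (m - 2) div 2"
  have mk: "m = 2 * k + 2" using a(1) a(2) unfolding k_def by (auto elim!: evenE)
  have k18: "k \<ge> 18" using a(1) mk by simp
  define \<rho> where "\<rho> = spectral_radius E"
  have "spectral_radius (book k) \<le> \<rho>"
    using a(6) book_simple[of k] book_card[of k] book_free[of k] mk unfolding \<rho>_def by auto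
  then have l0: "lam0 k \<le> \<rho>" using book_rho[of k] by simp
  have "(12::real) \<le> sqrt (1 + 8 * real k)" by (rule real_le_rsqrt) (use k18 in simp)
  then have "lam0 k \<ge> 13/2" unfolding lam0_def by simp
  then have rho: "\<rho> \<ge> 13/2" using l0 by simp
  have "(\<rho> - lam0 k) * (\<rho> + lam0 k - 1) \<ge> 0" using l0 lam0_pos[of k] by simp
  then have "\<rho>^2 - \<rho> \<ge> (lam0 k)^2 - lam0 k" by (simp add: algebra_simps power2_eq_square)
  then have gap: "\<rho>^2 - \<rho> \<ge> real (card E) - 2" using lam0_eq[of k] a(4) mk by simp
  have pv: "is_adj_eigenvector E \<rho> x" "\<forall>v\<in>verts E. 0 < x v"
    using a(7) unfolding perron_vector_def \<rho>_def by auto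
  interpret S: setting E x u \<rho>
    using a(3) a(5) a(8) pv a(9) rho gap by unfold_locales (auto simp: is_adj_eigenvector_def)
  obtain z where z: "z \<in> S.N" "\<forall>v\<in>S.N. \<forall>w\<in>S.N. {v,w} \<in> E \<longrightarrow> v = z \<or> w = z" "\<exists>w\<in>S.N. {z,w} \<in> E"
    using S.center by blast
  have c2: "\<forall>e\<in>E. card e = 2" using a(3) by (simp add: simple_graph_def)
  show ?thesis using star_iso[OF S.finN c2 z] by (simp add: S.N_def)
qed

end
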